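(* Let $\gamma$ be the geodesic with $\gamma(0)=1$ and $\dot\gamma(0)=z_0+x_0\in\mathfrak z\oplus\mathfrak v$, let $J=J_{z_0}$ and $x'(t)=e^{tJ}x_0$. A (smooth) vector field along $\gamma$ of the form $Y(t)=z(t)+e^{tJ}v(t)$, with $z(t)\in\mathfrak z$ and $v(t)\in\mathfrak v$ for each $t$, is a Jacobi field if and only if there is a constant $\zeta\in\mathfrak z$ such that for all $t$ $$\dot z(t)-[e^{tJ}v(t),x'(t)]=\zeta,\qquad e^{tJ}\ddot v(t)+e^{tJ}J\dot v(t)-J_\zeta x'(t)=0.$$
   Context: Let $N$ be a connected, simply connected, 2-step nilpotent real Lie group with Lie algebra $\mathfrak n$ and center $\mathfrak z$. Let $\langle\,,\rangle$ be an inner product on $\mathfrak n$, meaning a nondegenerate symmetric bilinear form (possibly indefinite); the same symbol denotes the induced left-invariant pseudo-Riemannian metric on $N$, with Levi-Civita connection $\nabla$. Assume the restriction of $\langle\,,\rangle$ to $\mathfrak z$ is nondegenerate and put $\mathfrak v=\mathfrak z^\perp$, so $\mathfrak n=\mathfrak z\oplus\mathfrak v$ orthogonally. For $z\in\mathfrak z$ define $J_z:\mathfrak v\to\mathfrak v$ by $\langle J_zx,y\rangle=\langle z,[x,y]\rangle$ for all $y\in\mathfrak v$; $J_z$ is skew-adjoint. All tangent spaces of $N$ are identified with $\mathfrak n=T_1N$ via left translation, so vector fields along a curve are $\mathfrak n$-valued functions; with this identification the geodesic $\gamma$ with $\gamma(0)=1$, $\dot\gamma(0)=z_0+x_0$ ($z_0\in\mathfrak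 z$, $x_0\in\mathfrak v$) satisfies $\dot\gamma(t)=z_0+e^{tJ_{z_0}}x_0$. A Jacobi field along $\gamma$ is a vector field $Y$ along $\gamma$ with $\nabla_{\dot\gamma}\nabla_{\dot\gamma}Y+R(Y,\dot\gamma)\dot\gamma=0$, where $R(X,Y)=\nabla_X\nabla_Y-\nabla_Y\nabla_X-\nabla_{[X,Y]}$ (equivalently, the variation fields of geodesic variations of $\gamma$). *)

theory Defs
  imports "HOL-Analysis.Analysis"
begin

text \<open>The Lie algebra n is modelled by a finite-dimensional real vector space 'a
(type class euclidean_space; its norm only provides the topology), with a Lie bracket
br and a (possibly indefinite) inner product g.  All vector fields along curves are
left-trivialised, i.e. are functions real to 'a.\<close>

definition nondegenerate :: "('a::zero \<Rightarrow> 'a \<Rightarrow> real) \<Rightarrow> bool" where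
  "nondegenerate g \<longleftrightarrow> (\<forall>x. (\<forall>y. g x y = 0) \<longrightarrow> x = 0)"

definition nondegenerate_on :: "('a::zero \<Rightarrow> 'a \<Rightarrow> real) \<Rightarrow> 'a set \<Rightarrow> bool" where
  "nondegenerate_on g S \<longleftrightarrow> (\<forall>x\<in>S. (\<forall>y\<in>S. g x y = 0) \<longrightarrow> x = 0)"

definition center :: "('a \<Rightarrow> 'a \<Rightarrow> 'a::real_vector) \<Rightarrow> 'a set" where
  "center br = {z. \<forall>x. br z x = 0}"

definition orth :: "('a \<Rightarrow> 'a \<Rightarrow> real) \<Rightarrow> 'a set \<Rightarrow> 'a set" where
  "orth g S = {x. \<forall>s\<in>S. g x s = 0}"

text \<open>Levi-Civita connection on left-invariant fields (Koszul formula).\<close>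
definition lc_nabla :: "('a::real_vector \<Rightarrow> 'a \<Rightarrow> real) \<Rightarrow> ('a \<Rightarrow> 'a \<Rightarrow> 'a) \<Rightarrow> 'a \<Rightarrow> 'a \<Rightarrow> 'a" where
  "lc_nabla g br X Y =
     (THE u. \<forall>W. g u W = (g (br X Y) W - g (br Y W) X + g (br W X) Y) / 2)"

definition curv :: "('a \<Rightarrow> 'a \<Rightarrow> real) \<Rightarrow> ('a \<Rightarrow> 'a \<Rightarrow> 'a::real_vector) \<Rightarrow> 'a \<Rightarrow> 'a \<Rightarrow> 'a \<Rightarrow> 'a" where
  "curv g br X Y W =
     lc_nabla g br X (lc_nabla g br Y W) - lc_nabla g br Y (lc_nabla g br X W)
     - lc_nabla g br (br X Y) W"

definition Jop :: "('a \<Rightarrow> 'a \<Rightarrow> real) \<Rightarrow> ('a \<Rightarrow> 'a \<Rightarrow> 'a::real_vector) \<Rightarrow> 'a \<Rightarrow> 'a \<Rightarrow> 'a" where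
  "Jop g br z x =
     (THE u. u \<in> orth g (center br) \<and> (\<forall>y\<in>orth g (center br). g u y = g z (br x y)))"

definition expop :: "('a \<Rightarrow> 'a) \<Rightarrow> real \<Rightarrow> 'a \<Rightarrow> 'a::real_normed_vector" where
  "expop J t x = (\<Sum>n. (t ^ n / fact n) *\<^sub>R (J ^^ n) x)"

definition smooth_curve :: "(real \<Rightarrow> 'a::real_normed_vector) \<Rightarrow> bool" where
  "smooth_curve f \<longleftrightarrow>
     (\<forall>k t. (((\<lambda>h s. vector_derivative h (at s)) ^^ k) f) differentiable (at t))"

definition cov_deriv :: "('a \<Rightarrow> 'a \<Rightarrow> real) \<Rightarrow> ('a \<Rightarrow> 'a \<Rightarrow> 'a::real_normed_vector)
    \<Rightarrow> (real \<Rightarrow> 'a) \<Rightarrow> (real \<Rightarrow> 'a) \<Rightarrow> real \<Rightarrow> 'a" where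
  "cov_deriv g br c Y t = vector_derivative Y (at t) + lc_nabla g br (c t) (Y t)"

definition is_jacobi :: "('a \<Rightarrow> 'a \<Rightarrow> real) \<Rightarrow> ('a \<Rightarrow> 'a \<Rightarrow> 'a::real_normed_vector)
    \<Rightarrow> (real \<Rightarrow> 'a) \<Rightarrow> (real \<Rightarrow> 'a) \<Rightarrow> bool" where
  "is_jacobi g br c Y \<longleftrightarrow>
     (\<forall>t. cov_deriv g br c (cov_deriv g br c Y) t + curv g br (Y t) (c t) (c t) = 0)"

end

theory Submission
  imports Defs
begin

lemma orthonormal_coeff:
  fixes B :: "'a::euclidean_space set"
  assumes fin: "finite B" and po: "pairwise orthogonal B" and n1: "\<And>x. x \<in> B \<Longrightarrow> norm x = 1"
    and b: "b \<in> B"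
  shows "(\<Sum>b'\<in>B. a b' *\<^sub>R b') \<bullet> b = a b"
proof -
  have "(\<Sum>b'\<in>B. a b' *\<^sub>R b') \<bullet> b = (\<Sum>b'\<in>B. a b' * (b' \<bullet> b))"
    by (simp add: inner_sum_left)
  also have "\<dots> = (\<Sum>b'\<in>B. if b' = b then a b else 0)"
  proof (rule sum.cong[OF refl])
    fix b' assume "b' \<in> B"
    show "a b' * (b' \<bullet> b) = (if b' = b then a b else 0)"
    proof (cases "b' = b")
      case True
      then show ?thesis using n1[OF b] by (simp add: norm_eq_1)
    next
      case False
      then have "orthogonal b' b" using po \<open>b' \<in> B\<close> b by (auto simp: pairwise_def)
      then show ?thesis using False by (simp add: orthogonal_def)
    qed
  qed
  also have "\<dots> = a b" using fin b by (simp add: sum.delta')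
  finally show ?thesis .
qed


lemma riesz_sub:
  fixes g :: "'a::euclidean_space \<Rightarrow> 'a \<Rightarrow> real"
  assumes S: "subspace S" and g: "bilinear g" and nd: "nondegenerate_on g S" and f: "linear f"
  shows "\<exists>u\<in>S. \<forall>y\<in>S. g u y = f y"
proof -
  obtain B where B: "B \<subseteq> S" "pairwise orthogonal B" "\<And>x. x\<in>B \<Longrightarrow> norm x = 1"
      "independent B" "span B = S"
    using orthonormal_basis_subspace[OF S] by metis
  have finB: "finite B" using B(4) independent_imp_finite by blast
  define L where "L u = (\<Sum>b\<in>B. g u b *\<^sub>R b)" for u
  have lin_gu: "linear (\<lambda>y. g u y)" for u using g by (simp add: bilinear_def)
  have lin_gl: "linear (\<lambda>u. g u y)" for y using g by (simp add: bilinear_def)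
  have linL: "linear L"
  proof (rule linearI)
    fix u w show "L (u + w) = L u + L w"
      unfolding L_def by (simp add: linear_add[OF lin_gl] scaleR_add_left sum.distrib)
  next
    fix r u show "L (r *\<^sub>R u) = r *\<^sub>R L u"
      unfolding L_def by (simp add: linear_scale[OF lin_gl] scaleR_sum_right)
  qed
  have Lb: "L u \<bullet> b = g u b" if "b \<in> B" for u b
    unfolding L_def by (rule orthonormal_coeff[OF finB B(2) B(3) that])
  have agree: "g u y = h y" if "linear h" "\<And>b. b \<in> B \<Longrightarrow> g u b = h b" "y \<in> S" for u h y
    using linear_eq_on_span[OF lin_gu[of u] that(1), of B y, OF that(2)] that(3) B(5) by simp
  have inj: "inj_on L S"
    unfolding linear_inj_on_iff_eq_0[OF linL S]
  proof (intro ballI impI)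
    fix x assume x: "x \<in> S" "L x = 0"
    have "g x y = 0" if "y \<in> S" for y
    proof -
      have "g x b = 0" if "b \<in> B" for b using Lb[OF that, of x] x(2) by simp
      then show ?thesis using agree[of "\<lambda>_. 0" x y, OF linear_zero] \<open>y \<in> S\<close> by blast
    qed
    then show "x = 0" using nd x(1) unfolding nondegenerate_on_def by blast
  qed
  have inS: "(\<Sum>b\<in>B. a b *\<^sub>R b) \<in> S" for a
    by (rule subspace_sum[OF S]) (use B(1) subspace_scale[OF S] in blast)
  have LS: "L ` S \<subseteq> S"
    unfolding L_def using inS by blast
  have spS: "span S = S" using S by (simp add: span_eq_iff)
  have "dim (L ` S) = dim S"
    using dim_image_eq[OF linL, of S] inj spS by simp
  then have LSS: "L ` S = S"
    using subspace_dim_equal[OF linear_subspace_image[OF linL S] S LS] by simp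
  define c where "c = (\<Sum>b\<in>B. f b *\<^sub>R b)"
  have "c \<in> S" unfolding c_def by (rule inS)
  then obtain u where u: "u \<in> S" "L u = c" using LSS by (metis imageE)
  have "g u b = f b" if "b \<in> B" for b
    using Lb[OF that, of u] u(2) orthonormal_coeff[OF finB B(2) B(3) that, of f] by (simp add: c_def)
  then have "\<forall>y\<in>S. g u y = f y" using agree[OF f] by blast
  then show ?thesis using u(1) by blast
qed

locale tsn =
  fixes br :: "'a::euclidean_space \<Rightarrow> 'a \<Rightarrow> 'a" and g :: "'a \<Rightarrow> 'a \<Rightarrow> real"
  assumes br_bilinear: "bilinear br" and br_antisym: "\<And>x y. br x y = - br y x"
    and two_step: "\<And>x y w. br (br x y) w = 0"
    and g_bilinear: "bilinear g" and g_sym: "\<And>x y. g x y = g y x"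
    and g_nondeg: "nondegenerate g" and g_nondeg_center: "nondegenerate_on g (center br)"
begin

abbreviation Z where "Z \<equiv> center br"
abbreviation V where "V \<equiv> orth g Z"
abbreviation J where "J \<equiv> Jop g br"
abbreviation nab where "nab \<equiv> lc_nabla g br"

lemma bbr: "bounded_bilinear br" using br_bilinear bilinear_conv_bounded_bilinear by blast
lemma bg: "bounded_bilinear g" using g_bilinear bilinear_conv_bounded_bilinear by blast

interpretation B: bounded_bilinear br by (rule bbr)
interpretation G: bounded_bilinear g by (rule bg)

lemma br_Z[simp]: "br x y \<in> Z" unfolding center_def using two_step by simp
lemma Z_br1[simp]: "c \<in> Z \<Longrightarrow> br c x = 0" unfolding center_def by simp
lemma Z_br2[simp]: "c \<in> Z \<Longrightarrow> br x c = 0" using br_antisym[of x c] unfolding center_def by simp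
lemma br_self[simp]: "br x x = 0"
proof -
  have "br x x + br x x = 0" using br_antisym[of x x] by (simp add: eq_neg_iff_add_eq_0)
  then have "(2::real) *\<^sub>R br x x = 0" by (simp add: scaleR_2)
  then show ?thesis by simp
qed

lemma subZ: "subspace Z"
  unfolding subspace_def center_def by (simp add: B.add_left B.scaleR_left B.zero_left)
lemma subV: "subspace V"
  unfolding subspace_def orth_def by (simp add: G.add_left G.scaleR_left G.zero_left)

lemma V_orth1: "x \<in> V \<Longrightarrow> c \<in> Z \<Longrightarrow> g x c = 0" unfolding orth_def by simp
lemma V_orth2: "x \<in> V \<Longrightarrow> c \<in> Z \<Longrightarrow> g c x = 0" using g_sym V_orth1 by metis

lemma ZV0: "a \<in> Z \<Longrightarrow> a \<in> V \<Longrightarrow> a = 0"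
  using g_nondeg_center V_orth1 unfolding nondegenerate_on_def by blast

lemma lin_gl: "linear (\<lambda>u. g u y)" using g_bilinear by (simp add: bilinear_def)
lemma lin_gr: "linear (\<lambda>u. g y u)" using g_bilinear by (simp add: bilinear_def)

lemma decomp: "\<exists>a\<in>Z. w - a \<in> V"
proof -
  have nd: "nondegenerate_on g Z" by (rule g_nondeg_center)
  obtain a where a: "a \<in> Z" "\<forall>y\<in>Z. g a y = g w y"
    using riesz_sub[OF subZ g_bilinear nd lin_gr[of w]] by blast
  have "w - a \<in> V" unfolding orth_def using a by (simp add: G.diff_left)
  then show ?thesis using a(1) by blast
qed

lemma riesz_global: "linear f \<Longrightarrow> \<exists>u. \<forall>y. g u y = f y"
  using riesz_sub[OF subspace_UNIV g_bilinear, of f] g_nondeg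
  unfolding nondegenerate_on_def nondegenerate_def by blast

lemma g_unique: "(\<And>W. g u W = g u' W) \<Longrightarrow> u = u'"
proof -
  assume h: "\<And>W. g u W = g u' W"
  have "g (u - u') W = 0" for W using h by (simp add: G.diff_left)
  then have "u - u' = 0" using g_nondeg unfolding nondegenerate_def by blast
  then show ?thesis by simp
qed

lemma V_unique: "u \<in> V \<Longrightarrow> u' \<in> V \<Longrightarrow> (\<And>y. y \<in> V \<Longrightarrow> g u y = g u' y) \<Longrightarrow> u = u'"
proof (rule g_unique)
  fix W assume u: "u \<in> V" "u' \<in> V" and h: "\<And>y. y \<in> V \<Longrightarrow> g u y = g u' y"
  obtain a where a: "a \<in> Z" "W - a \<in> V" using decomp by blast
  have "g u W = g u a + g u (W - a)" by (simp add: G.diff_right)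
  also have "\<dots> = g u' a + g u' (W - a)" using V_orth1[OF u(1) a(1)] V_orth1[OF u(2) a(1)] h[OF a(2)] by simp
  also have "\<dots> = g u' W" by (simp add: G.diff_right)
  finally show "g u W = g u' W" .
qed

lemma J_exists: "\<exists>u. \<forall>W. g u W = g z (br x W)"
proof (rule riesz_global, rule linearI)
  show "g z (br x (b1 + b2)) = g z (br x b1) + g z (br x b2)" for b1 b2 by (simp add: B.add_right G.add_right)
  show "g z (br x (r *\<^sub>R b)) = r *\<^sub>R g z (br x b)" for r b by (simp add: B.scaleR_right G.scaleR_right)
qed

lemma J_char: "J z x \<in> V \<and> (\<forall>W. g (J z x) W = g z (br x W))"
proof -
  obtain u where u: "\<forall>W. g u W = g z (br x W)" using J_exists by blast
  have uV: "u \<in> V" unfolding orth_def using u by (simp add: G.zero_right)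
  have "J z x = u"
    unfolding Jop_def
  proof (rule the_equality)
    show "u \<in> V \<and> (\<forall>y\<in>V. g u y = g z (br x y))" using uV u by blast
    fix u' assume "u' \<in> V \<and> (\<forall>y\<in>V. g u' y = g z (br x y))"
    then show "u' = u" using V_unique[OF _ uV, of u'] u by auto
  qed
  then show ?thesis using u uV by simp
qed

lemma J_V[simp]: "J z x \<in> V" using J_char by blast
lemma J_g: "g (J z x) W = g z (br x W)" using J_char by blast
lemma J_unique: "(\<And>W. g u W = g z (br x W)) \<Longrightarrow> J z x = u"
  using g_unique J_g by metis

lemma bJ: "bounded_bilinear J"
proof -
  have "bilinear J"
    unfolding bilinear_def
  proof (intro conjI allI)
    fix z show "linear (J z)"
    proof (rule linearI)
      show "J z (b1 + b2) = J z b1 + J z b2" for b1 b2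
        by (rule J_unique) (simp add: G.add_left J_g B.add_left G.add_right)
      show "J z (r *\<^sub>R b) = r *\<^sub>R J z b" for r b
        by (rule J_unique) (simp add: G.scaleR_left J_g B.scaleR_left G.scaleR_right)
    qed
  next
    fix x show "linear (\<lambda>z. J z x)"
    proof (rule linearI)
      show "J (b1 + b2) x = J b1 x + J b2 x" for b1 b2
        by (rule J_unique) (simp add: G.add_left J_g)
      show "J (r *\<^sub>R b) x = r *\<^sub>R J b x" for r b
        by (rule J_unique) (simp add: G.scaleR_left J_g)
    qed
  qed
  then show ?thesis using bilinear_conv_bounded_bilinear by blast
qed

end

lemma linear_funpow:
  fixes L :: "'a::real_vector \<Rightarrow> 'a"
  assumes L: "linear L" shows "linear (L ^^ n)"
proof (rule linearI)
  show "(L ^^ n) (x + y) = (L ^^ n) x + (L ^^ n) y" for x y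
    by (induction n) (simp_all add: linear_add[OF L])
  show "(L ^^ n) (r *\<^sub>R x) = r *\<^sub>R (L ^^ n) x" for r x
    by (induction n) (simp_all add: linear_scale[OF L])
qed

lemma funpow_bound:
  fixes L :: "'a::real_normed_vector \<Rightarrow> 'a"
  assumes "\<And>x. norm (L x) \<le> norm x * K" "K \<ge> 0"
  shows "norm ((L ^^ n) x) \<le> K ^ n * norm x"
proof (induction n)
  case 0 then show ?case by simp
next
  case (Suc n)
  have "norm ((L ^^ Suc n) x) = norm (L ((L ^^ n) x))" by simp
  also have "\<dots> \<le> norm ((L ^^ n) x) * K" by (rule assms(1))
  also have "\<dots> \<le> (K ^ n * norm x) * K" by (rule mult_right_mono[OF Suc assms(2)])
  finally show ?case by (simp add: algebra_simps)
qed

lemma exp_summable: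
  fixes L :: "'a::euclidean_space \<Rightarrow> 'a"
  assumes L: "linear L"
  shows "summable (\<lambda>n. (t ^ n / fact n) *\<^sub>R (L ^^ n) x)"
proof -
  obtain K where K: "K > 0" "\<And>x. norm (L x) \<le> norm x * K"
    using bounded_linear.pos_bounded[OF L[unfolded linear_conv_bounded_linear]] by blast
  have s: "summable (\<lambda>n. norm x * (inverse (fact n) * (\<bar>t\<bar> * K) ^ n))"
    by (intro summable_mult summable_exp)
  show ?thesis
  proof (rule summable_comparison_test'[OF s])
    fix n :: nat
    have "norm ((t ^ n / fact n) *\<^sub>R (L ^^ n) x) = (\<bar>t\<bar> ^ n / fact n) * norm ((L ^^ n) x)"
      by (simp add: power_abs)
    also have "\<dots> \<le> (\<bar>t\<bar> ^ n / fact n) * (K ^ n * norm x)"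
      by (rule mult_left_mono[OF funpow_bound[OF K(2)]]) (use K in auto)
    also have "\<dots> = norm x * (inverse (fact n) * (\<bar>t\<bar> * K) ^ n)"
      by (simp add: power_mult_distrib divide_inverse algebra_simps)
    finally show "norm ((t ^ n / fact n) *\<^sub>R (L ^^ n) x) \<le> norm x * (inverse (fact n) * (\<bar>t\<bar> * K) ^ n)" .
  qed
qed

lemma exp_blin:
  fixes L :: "'a::euclidean_space \<Rightarrow> 'a"
  assumes L: "linear L" and M: "bounded_linear M"
  shows "M (expop L t x) = (\<Sum>n. M ((t ^ n / fact n) *\<^sub>R (L ^^ n) x))"
  unfolding expop_def using bounded_linear.suminf[OF M exp_summable[OF L]] by simp

lemma exp_linear:
  fixes L :: "'a::euclidean_space \<Rightarrow> 'a"
  assumes L: "linear L"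
  shows "linear (expop L t)"
proof (rule linearI)
  fix x y
  have "expop L t (x + y) = (\<Sum>n. (t ^ n / fact n) *\<^sub>R (L ^^ n) x + (t ^ n / fact n) *\<^sub>R (L ^^ n) y)"
    unfolding expop_def by (simp add: linear_add[OF linear_funpow[OF L]] scaleR_add_right)
  also have "\<dots> = expop L t x + expop L t y"
    unfolding expop_def by (rule suminf_add[OF exp_summable[OF L] exp_summable[OF L], symmetric])
  finally show "expop L t (x + y) = expop L t x + expop L t y" .
next
  fix r x
  have "expop L t (r *\<^sub>R x) = (\<Sum>n. r *\<^sub>R ((t ^ n / fact n) *\<^sub>R (L ^^ n) x))"
    unfolding expop_def by (simp add: linear_scale[OF linear_funpow[OF L]] mult.commute)
  also have "\<dots> = r *\<^sub>R expop L t x"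
    unfolding expop_def by (rule suminf_scaleR_right[OF exp_summable[OF L], symmetric])
  finally show "expop L t (r *\<^sub>R x) = r *\<^sub>R expop L t x" .
qed

lemma exp_commute:
  fixes L :: "'a::euclidean_space \<Rightarrow> 'a"
  assumes L: "linear L"
  shows "L (expop L t x) = expop L t (L x)"
proof -
  have bL: "bounded_linear L" using L linear_conv_bounded_linear by blast
  have "L (expop L t x) = (\<Sum>n. L ((t ^ n / fact n) *\<^sub>R (L ^^ n) x))" by (rule exp_blin[OF L bL])
  also have "\<dots> = expop L t (L x)" unfolding expop_def
    by (simp add: linear_scale[OF L] funpow_swap1)
  finally show ?thesis .
qed

lemma exp_invariant:
  fixes L :: "'a::euclidean_space \<Rightarrow> 'a"
  assumes L: "linear L" and M: "bounded_linear (M :: 'a \<Rightarrow> real)" and h: "\<And>n. M ((L ^^ n) x) = 0"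
  shows "M (expop L t x) = 0"
proof -
  have "M (expop L t x) = (\<Sum>n. M ((t ^ n / fact n) *\<^sub>R (L ^^ n) x))" by (rule exp_blin[OF L M])
  also have "\<dots> = (\<Sum>n. 0)" by (simp add: linear_scale[OF bounded_linear.linear[OF M]] h)
  finally show ?thesis by simp
qed


lemma exp_deriv:
  fixes L :: "'a::euclidean_space \<Rightarrow> 'a"
  assumes L: "linear L"
  shows "((\<lambda>s. expop L s x) has_vector_derivative L (expop L t x)) (at t)"
proof -
  define c where "c y b n = ((L ^^ n) y \<bullet> b) / fact n" for y b n
  have ceq: "(\<lambda>n. c y b n * s ^ n) = (\<lambda>n. ((s ^ n / fact n) *\<^sub>R (L ^^ n) y) \<bullet> b)" for y b s
    by (simp add: fun_eq_iff c_def)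
  have rep: "expop L s y \<bullet> b = (\<Sum>n. c y b n * s ^ n)" for s y b
    using exp_blin[OF L bounded_linear_inner_left[of b], of s y] by (simp add: ceq)
  have summ: "summable (\<lambda>n. c y b n * s ^ n)" for y b s
    unfolding ceq by (rule bounded_linear.summable[OF bounded_linear_inner_left exp_summable[OF L]])
  have dif: "diffs (c x b) = c (L x) b" for b
  proof
    fix n
    have "diffs (c x b) n = of_nat (Suc n) * (((L ^^ n) (L x) \<bullet> b) / (of_nat (Suc n) * fact n))"
      by (simp add: diffs_def c_def funpow_Suc_right del: funpow.simps of_nat_Suc)
    also have "\<dots> = c (L x) b n" by (simp add: c_def)
    finally show "diffs (c x b) n = c (L x) b n" .
  qed
  have comp: "((\<lambda>s. expop L s x \<bullet> b) has_real_derivative (expop L t (L x) \<bullet> b)) (at t)" for b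
    using termdiffs_strong_converges_everywhere[OF summ, of x b t] unfolding rep dif .
  have "((\<lambda>s. \<Sum>b\<in>Basis. (expop L s x \<bullet> b) *\<^sub>R b) has_vector_derivative
           (\<Sum>b\<in>Basis. (expop L t (L x) \<bullet> b) *\<^sub>R b)) (at t)"
    by (intro has_vector_derivative_sum has_vector_derivative_scaleR[OF comp, THEN has_vector_derivative_eq_rhs]) auto
  then show ?thesis by (simp add: euclidean_representation exp_commute[OF L])
qed

lemma exp_deriv_prod:
  fixes L :: "'a::euclidean_space \<Rightarrow> 'a"
  assumes L: "linear L" and u: "(u has_vector_derivative u') (at t)"
  shows "((\<lambda>s. expop L s (u s)) has_vector_derivative (L (expop L t (u t)) + expop L t u')) (at t)"
proof -
  have lin: "linear (expop L s)" for s by (rule exp_linear[OF L])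
  have rep: "expop L s y = (\<Sum>b\<in>Basis. (y \<bullet> b) *\<^sub>R expop L s b)" for s y
  proof -
    have "expop L s y = expop L s (\<Sum>b\<in>Basis. (y \<bullet> b) *\<^sub>R b)" by (simp add: euclidean_representation)
    also have "\<dots> = (\<Sum>b\<in>Basis. (y \<bullet> b) *\<^sub>R expop L s b)"
      by (simp add: linear_sum[OF lin] linear_scale[OF lin])
    finally show ?thesis .
  qed
  have ub: "((\<lambda>s. u s \<bullet> b) has_real_derivative (u' \<bullet> b)) (at t)" for b
    unfolding has_real_derivative_iff_has_vector_derivative
    by (rule bounded_linear.has_vector_derivative[OF bounded_linear_inner_left u])
  have "((\<lambda>s. \<Sum>b\<in>Basis. (u s \<bullet> b) *\<^sub>R expop L s b) has_vector_derivative
      (\<Sum>b\<in>Basis. (u t \<bullet> b) *\<^sub>R L (expop L t b) + (u' \<bullet> b) *\<^sub>R expop L t b)) (at t)"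
    by (intro has_vector_derivative_sum has_vector_derivative_scaleR ub exp_deriv[OF L])
  moreover have "(\<Sum>b\<in>Basis. (u t \<bullet> b) *\<^sub>R L (expop L t b) + (u' \<bullet> b) *\<^sub>R expop L t b)
      = L (expop L t (u t)) + expop L t u'"
  proof -
    have "(\<Sum>b\<in>Basis. (u t \<bullet> b) *\<^sub>R L (expop L t b)) = L (\<Sum>b\<in>Basis. (u t \<bullet> b) *\<^sub>R expop L t b)"
      by (simp add: linear_sum[OF L] linear_scale[OF L])
    then show ?thesis by (simp add: sum.distrib rep[symmetric])
  qed
  ultimately show ?thesis by (simp add: rep[symmetric])
qed


context tsn begin

interpretation B: bounded_bilinear br by (rule bbr)
interpretation G: bounded_bilinear g by (rule bg)
interpretation JJ: bounded_bilinear J by (rule bJ)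

definition K where "K a b W = (g (br a b) W - g (br b W) a + g (br W a) b) / 2"

lemma nab_char: "g (nab a b) W = K a b W"
proof -
  have "linear (K a b)"
    by (rule linearI) (simp_all add: K_def B.add_right B.add_left G.add_left G.add_right
        B.scaleR_left B.scaleR_right G.scaleR_left G.scaleR_right field_simps)
  then obtain u where u: "\<forall>W. g u W = K a b W" using riesz_global by blast
  have "nab a b = u"
    unfolding lc_nabla_def K_def[symmetric]
  proof (rule the_equality)
    show "\<forall>W. g u W = K a b W" by (rule u)
    fix u' assume "\<forall>W. g u' W = K a b W"
    then show "u' = u" using g_unique u by metis
  qed
  then show ?thesis using u by simp
qed

lemma nab_unique: "(\<And>W. g u W = K a b W) \<Longrightarrow> nab a b = u"
  using g_unique nab_char by metis

lemma nab_decomp: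
  assumes a: "a = a1 + a2" and b: "b = b1 + b2"
    and a1: "a1 \<in> Z" and b1: "b1 \<in> Z" and a2: "a2 \<in> V" and b2: "b2 \<in> V"
  shows "nab a b = (1/2) *\<^sub>R br a2 b2 - (1/2) *\<^sub>R J a1 b2 - (1/2) *\<^sub>R J b1 a2"
proof (rule nab_unique)
  fix W
  have e1: "br a b = br a2 b2" using a1 b1 by (simp add: a b B.add_left B.add_right)
  have e2: "g (br b W) a = g a1 (br b2 W)"
  proof -
    have "g (br b W) a = g (br b2 W) a1 + g (br b2 W) a2"
      using b1 by (simp add: a b B.add_left G.add_right)
    also have "g (br b2 W) a2 = 0" using V_orth2[OF a2 br_Z] .
    finally show ?thesis using g_sym by simp
  qed
  have e3: "g (br W a) b = - g b1 (br a2 W)"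
  proof -
    have "g (br W a) b = g (br W a2) b1 + g (br W a2) b2"
      using a1 by (simp add: a b B.add_right G.add_right)
    also have "g (br W a2) b2 = 0" using V_orth2[OF b2 br_Z] .
    finally show ?thesis using g_sym br_antisym[of W a2] by (simp add: G.minus_left G.minus_right)
  qed
  show "g ((1/2) *\<^sub>R br a2 b2 - (1/2) *\<^sub>R J a1 b2 - (1/2) *\<^sub>R J b1 a2) W = K a b W"
    unfolding K_def e1 e2 e3
    by (simp add: G.diff_left G.scaleR_left J_g)
qed

end

lemma deriv_lin0:
  assumes M: "bounded_linear M" and h: "\<And>s. M (u s) = 0" and d: "(u has_vector_derivative u') (at t)"
  shows "M u' = 0"
proof -
  have "((\<lambda>s. M (u s)) has_vector_derivative M u') (at t)"
    by (rule bounded_linear.has_vector_derivative[OF M d])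
  moreover have "((\<lambda>s. M (u s)) has_vector_derivative 0) (at t)" using h by simp
  ultimately show ?thesis using vector_derivative_unique_at by blast
qed

context tsn begin

interpretation B: bounded_bilinear br by (rule bbr)
interpretation G: bounded_bilinear g by (rule bg)
interpretation JJ: bounded_bilinear J by (rule bJ)

lemma deriv_Z: "(\<And>s. u s \<in> Z) \<Longrightarrow> (u has_vector_derivative u') (at t) \<Longrightarrow> u' \<in> Z"
proof -
  assume h: "\<And>s. u s \<in> Z" and d: "(u has_vector_derivative u') (at t)"
  have "br u' x = 0" for x
    by (rule deriv_lin0[OF B.bounded_linear_left _ d]) (use h in simp)
  then show "u' \<in> Z" unfolding center_def by simp
qed

lemma deriv_V: "(\<And>s. u s \<in> V) \<Longrightarrow> (u has_vector_derivative u') (at t) \<Longrightarrow> u' \<in> V"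
proof -
  assume h: "\<And>s. u s \<in> V" and d: "(u has_vector_derivative u') (at t)"
  have "g u' c = 0" if "c \<in> Z" for c
    by (rule deriv_lin0[OF G.bounded_linear_left _ d]) (use h that V_orth1 in blast)
  then show "u' \<in> V" unfolding orth_def by simp
qed

lemma linJ: "linear (J z)"
  using JJ.bounded_linear_right bounded_linear.linear by blast

lemma E_V: "y \<in> V \<Longrightarrow> expop (J z) t y \<in> V"
proof -
  assume y: "y \<in> V"
  have pw: "(J z ^^ n) y \<in> V" for n by (cases n) (simp_all add: y)
  have "g (expop (J z) t y) c = 0" if "c \<in> Z" for c
    by (rule exp_invariant[OF linJ G.bounded_linear_left]) (use pw that V_orth1 in blast)
  then show ?thesis unfolding orth_def by simp
qed

lemma sZ_add: "a \<in> Z \<Longrightarrow> b \<in> Z \<Longrightarrow> a + b \<in> Z" using subZ subspace_add by blast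
lemma sZ_diff: "a \<in> Z \<Longrightarrow> b \<in> Z \<Longrightarrow> a - b \<in> Z" using subZ subspace_diff by blast
lemma sZ_scale: "a \<in> Z \<Longrightarrow> r *\<^sub>R a \<in> Z" using subZ subspace_scale by blast
lemma sV_add: "a \<in> V \<Longrightarrow> b \<in> V \<Longrightarrow> a + b \<in> V" using subV subspace_add by blast
lemma sV_diff: "a \<in> V \<Longrightarrow> b \<in> V \<Longrightarrow> a - b \<in> V" using subV subspace_diff by blast
lemma sV_scale: "a \<in> V \<Longrightarrow> r *\<^sub>R a \<in> V" using subV subspace_scale by blast
lemma sV_neg: "a \<in> V \<Longrightarrow> - a \<in> V" using subV subspace_neg by blast
lemma zero_Z: "0 \<in> Z" using subZ subspace_0 by blast
lemma zero_V: "0 \<in> V" using subV subspace_0 by blast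

end

lemma vec_eq_inner: "(\<And>e. (a::'a::euclidean_space) \<bullet> e = b \<bullet> e) \<Longrightarrow> a = b"
  by (metis euclidean_eqI)

context tsn begin

interpretation B: bounded_bilinear br by (rule bbr)
interpretation G: bounded_bilinear g by (rule bg)
interpretation JJ: bounded_bilinear J by (rule bJ)

lemma main:
  fixes z0 x0 :: 'a and z v :: "real \<Rightarrow> 'a"
  assumes z0_in: "z0 \<in> Z" and x0_in: "x0 \<in> V" and z_in: "\<And>t. z t \<in> Z" and v_in: "\<And>t. v t \<in> V"
    and z_smooth: "smooth_curve z" and v_smooth: "smooth_curve v"
  shows "is_jacobi g br (\<lambda>t. z0 + expop (J z0) t x0)
            (\<lambda>t. z t + expop (J z0) t (v t))
         \<longleftrightarrow> (\<exists>\<zeta>\<in>Z. \<forall>t.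
              vector_derivative z (at t)
                - br (expop (J z0) t (v t)) (expop (J z0) t x0) = \<zeta>
            \<and> expop (J z0) t (vector_derivative (\<lambda>s. vector_derivative v (at s)) (at t))
                + expop (J z0) t (J z0 (vector_derivative v (at t)))
                - J \<zeta> (expop (J z0) t x0) = 0)"
proof -
  define z1 where "z1 = (\<lambda>s. vector_derivative z (at s))"
  define z2 where "z2 = (\<lambda>s. vector_derivative z1 (at s))"
  define v1 where "v1 = (\<lambda>s. vector_derivative v (at s))"
  define v2 where "v2 = (\<lambda>s. vector_derivative v1 (at s))"
  define X where "X = (\<lambda>t. expop (J z0) t x0)"
  define W where "W = (\<lambda>t. expop (J z0) t (v t))"
  define E1 where "E1 = (\<lambda>t. expop (J z0) t (v1 t))"
  define E2 where "E2 = (\<lambda>t. expop (J z0) t (v2 t))"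
  have bL: "bounded_linear (J z0)" by (rule JJ.bounded_linear_right)
  have linL: "linear (J z0)" by (rule linJ)
  have sm0: "f differentiable at t" if "smooth_curve f" for f :: "real \<Rightarrow> 'a" and t
    using that[unfolded smooth_curve_def, rule_format, of 0 t] by simp
  have sm1: "(\<lambda>s. vector_derivative f (at s)) differentiable at t"
    if "smooth_curve f" for f :: "real \<Rightarrow> 'a" and t
    using that[unfolded smooth_curve_def, rule_format, of "Suc 0" t] by simp
  have dz: "(z has_vector_derivative z1 t) (at t)" for t
    unfolding z1_def using sm0[OF z_smooth] vector_derivative_works by blast
  have dz1: "(z1 has_vector_derivative z2 t) (at t)" for t
    unfolding z2_def using sm1[OF z_smooth] vector_derivative_works unfolding z1_def by blast
  have dv: "(v has_vector_derivative v1 t) (at t)" for t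
    unfolding v1_def using sm0[OF v_smooth] vector_derivative_works by blast
  have dv1: "(v1 has_vector_derivative v2 t) (at t)" for t
    unfolding v2_def using sm1[OF v_smooth] vector_derivative_works unfolding v1_def by blast
  have z1Z: "z1 t \<in> Z" for t by (rule deriv_Z[OF z_in dz])
  have z2Z: "z2 t \<in> Z" for t by (rule deriv_Z[OF z1Z dz1])
  have v1V: "v1 t \<in> V" for t by (rule deriv_V[OF v_in dv])
  have v2V: "v2 t \<in> V" for t by (rule deriv_V[OF v1V dv1])
  have XV: "X t \<in> V" for t unfolding X_def by (rule E_V[OF x0_in])
  have WV: "W t \<in> V" for t unfolding W_def by (rule E_V[OF v_in])
  have E1V: "E1 t \<in> V" for t unfolding E1_def by (rule E_V[OF v1V])
  have E2V: "E2 t \<in> V" for t unfolding E2_def by (rule E_V[OF v2V])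
  have dX: "(X has_vector_derivative J z0 (X t)) (at t)" for t
    unfolding X_def by (rule exp_deriv[OF linL])
  have dW: "(W has_vector_derivative J z0 (W t) + E1 t) (at t)" for t
    unfolding W_def E1_def by (rule exp_deriv_prod[OF linL dv])
  have dE1: "(E1 has_vector_derivative J z0 (E1 t) + E2 t) (at t)" for t
    unfolding E1_def E2_def by (rule exp_deriv_prod[OF linL dv1])
  define c where "c = (\<lambda>t. z0 + X t)"
  define Y where "Y = (\<lambda>t. z t + W t)"
  have dY: "(Y has_vector_derivative z1 t + (J z0 (W t) + E1 t)) (at t)" for t
    unfolding Y_def by (rule has_vector_derivative_add[OF dz dW])
  define F1 where "F1 = (\<lambda>t. z1 t + (J z0 (W t) + E1 t) + ((1/2) *\<^sub>R br (X t) (W t)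
      - (1/2) *\<^sub>R J z0 (W t) - (1/2) *\<^sub>R J (z t) (X t)))"
  have cov1: "cov_deriv g br c Y = F1"
  proof
    fix t
    have "vector_derivative Y (at t) = z1 t + (J z0 (W t) + E1 t)" using dY vector_derivative_at by blast
    moreover have "nab (c t) (Y t) = (1/2) *\<^sub>R br (X t) (W t) - (1/2) *\<^sub>R J z0 (W t) - (1/2) *\<^sub>R J (z t) (X t)"
      by (rule nab_decomp[of "c t" z0 "X t" "Y t" "z t" "W t"]) (simp_all add: c_def Y_def z0_in z_in XV WV)
    ultimately show "cov_deriv g br c Y t = F1 t" unfolding cov_deriv_def F1_def by simp
  qed
  define F1' where "F1' t = z2 t + (J z0 (J z0 (W t) + E1 t) + (J z0 (E1 t) + E2 t))
      + ((1/2) *\<^sub>R (br (X t) (J z0 (W t) + E1 t) + br (J z0 (X t)) (W t))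
      - (1/2) *\<^sub>R J z0 (J z0 (W t) + E1 t) - (1/2) *\<^sub>R (J (z t) (J z0 (X t)) + J (z1 t) (X t)))" for t
  have dF1: "(F1 has_vector_derivative F1' t) (at t)" for t
  proof -
    have sc: "((\<lambda>s. r *\<^sub>R f s) has_vector_derivative r *\<^sub>R f') (at t)"
      if "(f has_vector_derivative f') (at t)" for f f' and r::real
      using bounded_linear.has_vector_derivative[OF bounded_linear_scaleR_right that] .
    have d2: "((\<lambda>s. J z0 (W s)) has_vector_derivative J z0 (J z0 (W t) + E1 t)) (at t)"
      by (rule bounded_linear.has_vector_derivative[OF bL dW])
    have d4: "((\<lambda>s. br (X s) (W s)) has_vector_derivative
        br (X t) (J z0 (W t) + E1 t) + br (J z0 (X t)) (W t)) (at t)"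
      by (rule B.has_vector_derivative[OF dX dW])
    have d5: "((\<lambda>s. J (z s) (X s)) has_vector_derivative J (z t) (J z0 (X t)) + J (z1 t) (X t)) (at t)"
      by (rule JJ.has_vector_derivative[OF dz dX])
    show ?thesis unfolding F1_def F1'_def
      by (intro has_vector_derivative_add has_vector_derivative_diff sc dz1 d2 d4 d5 dE1)
  qed
  have cov2: "cov_deriv g br c F1 t = F1' t + nab (c t) (F1 t)" for t
    unfolding cov_deriv_def using vector_derivative_at[OF dF1] by simp
  define A where "A t = z1 t + (1/2) *\<^sub>R br (X t) (W t)" for t
  define Bv where "Bv t = J z0 (W t) + E1 t - (1/2) *\<^sub>R J z0 (W t) - (1/2) *\<^sub>R J (z t) (X t)" for t
  have F1AB: "F1 t = A t + Bv t" for t unfolding F1_def A_def Bv_def by (simp add: algebra_simps)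
  have AZ: "A t \<in> Z" for t unfolding A_def by (intro sZ_add sZ_scale z1Z br_Z)
  have BV: "Bv t \<in> V" for t unfolding Bv_def by (intro sV_diff sV_add sV_scale J_V E1V)
  have n0: "nab (c t) (F1 t) = (1/2) *\<^sub>R br (X t) (Bv t) - (1/2) *\<^sub>R J z0 (Bv t) - (1/2) *\<^sub>R J (A t) (X t)" for t
    by (rule nab_decomp[of "c t" z0 "X t" "F1 t" "A t" "Bv t"]) (simp_all add: c_def z0_in XV AZ BV F1AB)
  have ncc: "nab (c t) (c t) = - J z0 (X t)" for t
  proof -
    have "nab (c t) (c t) = (1/2) *\<^sub>R br (X t) (X t) - (1/2) *\<^sub>R J z0 (X t) - (1/2) *\<^sub>R J z0 (X t)"
      by (rule nab_decomp) (simp_all add: c_def z0_in XV)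
    also have "\<dots> = - J z0 (X t)"
      by (rule vec_eq_inner) (simp add: inner_diff_left inner_minus_left)
    finally show ?thesis .
  qed
  have n1: "nab (Y t) (nab (c t) (c t)) = (1/2) *\<^sub>R br (W t) (- J z0 (X t))
      - (1/2) *\<^sub>R J (z t) (- J z0 (X t)) - (1/2) *\<^sub>R J 0 (W t)" for t
    by (rule nab_decomp[of _ "z t" "W t" _ 0 "- J z0 (X t)"]) (simp_all add: Y_def ncc z_in WV zero_Z sV_neg)
  define P where "P t = (1/2) *\<^sub>R br (W t) (X t)" for t
  define Q where "Q t = - (1/2) *\<^sub>R J (z t) (X t) - (1/2) *\<^sub>R J z0 (W t)" for t
  have PZ: "P t \<in> Z" for t unfolding P_def by (intro sZ_scale br_Z)
  have QV: "Q t \<in> V" for t unfolding Q_def by (intro sV_diff sV_neg sV_scale J_V)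
  have nYc: "nab (Y t) (c t) = P t + Q t" for t
  proof -
    have "nab (Y t) (c t) = (1/2) *\<^sub>R br (W t) (X t) - (1/2) *\<^sub>R J (z t) (X t) - (1/2) *\<^sub>R J z0 (W t)"
      by (rule nab_decomp) (simp_all add: Y_def c_def z0_in z_in XV WV)
    then show ?thesis unfolding P_def Q_def by (simp add: algebra_simps)
  qed
  have n2: "nab (c t) (nab (Y t) (c t)) = (1/2) *\<^sub>R br (X t) (Q t) - (1/2) *\<^sub>R J z0 (Q t) - (1/2) *\<^sub>R J (P t) (X t)" for t
    by (rule nab_decomp[of "c t" z0 "X t" _ "P t" "Q t", OF _ nYc]) (simp_all add: c_def z0_in XV PZ QV)
  have brYc: "br (Y t) (c t) = br (W t) (X t)" for t
    unfolding Y_def c_def using z_in[of t] z0_in by (simp add: B.add_left B.add_right)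
  have n3: "nab (br (Y t) (c t)) (c t) = (1/2) *\<^sub>R br 0 (X t) - (1/2) *\<^sub>R J (br (W t) (X t)) (X t) - (1/2) *\<^sub>R J z0 0" for t
    unfolding brYc by (rule nab_decomp[of _ "br (W t) (X t)" 0 "c t" z0 "X t"]) (simp_all add: c_def z0_in XV zero_V)
  define Ct where "Ct t = z2 t + br (J z0 (X t)) (W t) + br (X t) (J z0 (W t)) + br (X t) (E1 t)" for t
  define Vt where "Vt t = E2 t + expop (J z0) t (J z0 (v1 t)) - J (z1 t - br (W t) (X t)) (X t)" for t
  have E1c: "expop (J z0) t (J z0 (v1 t)) = J z0 (E1 t)" for t
    unfolding E1_def by (rule exp_commute[OF linL, symmetric])
  have as1: "br (X t) (W t) = - br (W t) (X t)" for t by (rule br_antisym)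
  have as2: "br (W t) (J z0 (X t)) = - br (J z0 (X t)) (W t)" for t by (rule br_antisym)
  have total: "cov_deriv g br c (cov_deriv g br c Y) t + curv g br (Y t) (c t) (c t) = Ct t + Vt t" for t
    unfolding cov1 cov2 curv_def n0 n1 n2 n3 ncc[symmetric]
    unfolding ncc A_def Bv_def P_def Q_def F1'_def Ct_def Vt_def E1c
    apply (rule vec_eq_inner)
    apply (simp add: B.add_left B.add_right B.diff_left B.diff_right B.scaleR_left B.scaleR_right
        B.minus_left B.minus_right JJ.add_left JJ.add_right JJ.diff_left JJ.diff_right JJ.scaleR_left
        JJ.scaleR_right JJ.minus_left JJ.minus_right JJ.zero_left JJ.zero_right B.zero_left B.zero_right
        as1 as2 inner_add_left inner_diff_left inner_scaleR_left inner_minus_left)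
    apply (simp add: field_simps)
    done
  have CZ: "Ct t \<in> Z" for t unfolding Ct_def by (intro sZ_add z2Z br_Z)
  have VV: "Vt t \<in> V" for t unfolding Vt_def by (intro sV_diff sV_add E2V E_V J_V)
  have split: "Ct t + Vt t = 0 \<longleftrightarrow> Ct t = 0 \<and> Vt t = 0" for t
  proof
    assume h: "Ct t + Vt t = 0"
    then have "Ct t = - Vt t" by (simp add: eq_neg_iff_add_eq_0)
    then have "Ct t \<in> V" using sV_neg[OF VV[of t]] by simp
    then have "Ct t = 0" using ZV0 CZ by blast
    then show "Ct t = 0 \<and> Vt t = 0" using h by simp
  qed simp
  have jac: "is_jacobi g br c Y \<longleftrightarrow> (\<forall>t. Ct t = 0 \<and> Vt t = 0)"
    unfolding is_jacobi_def total split ..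
  define q where "q t = z1 t - br (W t) (X t)" for t
  have as3: "br (J z0 (W t)) (X t) = - br (X t) (J z0 (W t))" for t by (rule br_antisym)
  have as4: "br (E1 t) (X t) = - br (X t) (E1 t)" for t by (rule br_antisym)
  have dq: "(q has_vector_derivative Ct t) (at t)" for t
  proof -
    have "(q has_vector_derivative z2 t - (br (W t) (J z0 (X t)) + br (J z0 (W t) + E1 t) (X t))) (at t)"
      unfolding q_def by (rule has_vector_derivative_diff[OF dz1 B.has_vector_derivative[OF dW dX]])
    moreover have "z2 t - (br (W t) (J z0 (X t)) + br (J z0 (W t) + E1 t) (X t)) = Ct t"
      unfolding Ct_def by (simp add: B.add_left as2 as3 as4)
    ultimately show ?thesis by simp
  qed
  have rhs: "(\<forall>t. Ct t = 0 \<and> Vt t = 0) \<longleftrightarrow>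
      (\<exists>\<zeta>\<in>Z. \<forall>t. q t = \<zeta> \<and> E2 t + expop (J z0) t (J z0 (v1 t)) - J \<zeta> (X t) = 0)"
  proof
    assume h: "\<forall>t. Ct t = 0 \<and> Vt t = 0"
    have "(q has_vector_derivative 0) (at x within UNIV)" for x
    proof -
      have "Ct x = 0" using h by blast
      then show ?thesis using dq[of x] by simp
    qed
    then obtain c0 where c0: "\<And>x. x \<in> UNIV \<Longrightarrow> q x = c0"
      using has_vector_derivative_zero_constant[of UNIV q] convex_UNIV by metis
    have c0': "q x = c0" for x using c0 by simp
    have "c0 = z1 0 - br (W 0) (X 0)" using c0'[of 0] unfolding q_def by simp
    then have "c0 \<in> Z" using sZ_diff[OF z1Z br_Z] by simp
    moreover have "q t = c0 \<and> E2 t + expop (J z0) t (J z0 (v1 t)) - J c0 (X t) = 0" for t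
    proof -
      have "Vt t = 0" using h by blast
      then show ?thesis using c0'[of t] unfolding Vt_def q_def by simp
    qed
    ultimately show "\<exists>\<zeta>\<in>Z. \<forall>t. q t = \<zeta> \<and> E2 t + expop (J z0) t (J z0 (v1 t)) - J \<zeta> (X t) = 0"
      by blast
  next
    assume "\<exists>\<zeta>\<in>Z. \<forall>t. q t = \<zeta> \<and> E2 t + expop (J z0) t (J z0 (v1 t)) - J \<zeta> (X t) = 0"
    then obtain \<zeta> where h: "\<And>t. q t = \<zeta>" "\<And>t. E2 t + expop (J z0) t (J z0 (v1 t)) - J \<zeta> (X t) = 0"
      by blast
    have qc: "q = (\<lambda>t. \<zeta>)" using h(1) by auto
    have "Ct t = 0" for t
    proof -
      have "((\<lambda>t. \<zeta>) has_vector_derivative Ct t) (at t)" using dq[of t] unfolding qc .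
      moreover have "((\<lambda>t. \<zeta>) has_vector_derivative 0) (at t)" by simp
      ultimately show ?thesis by (rule vector_derivative_unique_at)
    qed
    moreover have "Vt t = 0" for t using h(2)[of t] h(1)[of t] unfolding Vt_def q_def by simp
    ultimately show "\<forall>t. Ct t = 0 \<and> Vt t = 0" by blast
  qed
  have "is_jacobi g br c Y \<longleftrightarrow>
      (\<exists>\<zeta>\<in>Z. \<forall>t. q t = \<zeta> \<and> E2 t + expop (J z0) t (J z0 (v1 t)) - J \<zeta> (X t) = 0)"
    using jac rhs by simp
  then show ?thesis unfolding c_def Y_def q_def E2_def X_def W_def z1_def v2_def v1_def .
qed

end
theorem mainTheorem2:
  fixes br :: "'a::euclidean_space \<Rightarrow> 'a \<Rightarrow> 'a"
    and g :: "'a \<Rightarrow> 'a \<Rightarrow> real"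
    and z0 x0 :: 'a
    and z v :: "real \<Rightarrow> 'a"
  assumes br_bilinear: "bilinear br"
    and br_antisym: "\<And>x y. br x y = - br y x"
    and br_jacobi: "\<And>x y w. br x (br y w) + br y (br w x) + br w (br x y) = 0"
    and two_step: "\<And>x y w. br (br x y) w = 0"
    and g_bilinear: "bilinear g"
    and g_sym: "\<And>x y. g x y = g y x"
    and g_nondeg: "nondegenerate g"
    and g_nondeg_center: "nondegenerate_on g (center br)"
    and z0_in: "z0 \<in> center br"
    and x0_in: "x0 \<in> orth g (center br)"
    and z_in: "\<And>t. z t \<in> center br"
    and v_in: "\<And>t. v t \<in> orth g (center br)"
    and z_smooth: "smooth_curve z"
    and v_smooth: "smooth_curve v"
  shows "is_jacobi g br (\<lambda>t. z0 + expop (Jop g br z0) t x0)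
            (\<lambda>t. z t + expop (Jop g br z0) t (v t))
         \<longleftrightarrow> (\<exists>\<zeta>\<in>center br. \<forall>t.
              vector_derivative z (at t)
                - br (expop (Jop g br z0) t (v t)) (expop (Jop g br z0) t x0) = \<zeta>
            \<and> expop (Jop g br z0) t (vector_derivative (\<lambda>s. vector_derivative v (at s)) (at t))
                + expop (Jop g br z0) t (Jop g br z0 (vector_derivative v (at t)))
                - Jop g br \<zeta> (expop (Jop g br z0) t x0) = 0)"
proof -
  interpret tsn br g
    using br_bilinear br_antisym two_step g_bilinear g_sym g_nondeg g_nondeg_center
    by unfold_locales
  show ?thesis by (rule main[OF z0_in x0_in z_in v_in z_smooth v_smooth])
qed

end
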